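(* Under the assumptions of the multinomial lattice ($u>d>0$, $a_l=u^{L-l}d^{l-1}$, $a_L<1+R<a_1$, $a_l\neq 1+R$ for all $l$), let $X=(K-S_N)^+$ (European put) or $X=(S_N-K)^+$ (European call) with strike $K\ge0$ and maturity $N$, priced by $\pi_Q(0,X)=(1+R)^{-N}E^{Q^N}[X]$. Then for every strike $K$ and every risk-neutral $Q\in\mathcal{D}(\{a_1,\ldots,a_L\},1+R)$, $\pi_{Q_L}(0,X)\le\pi_Q(0,X)\le\pi_{Q_U}(0,X)$, where $Q_L=Q_{l^*,l^*+1}$ with $l^*$ the largest index such that $a_{l^*}>1+R$, and $Q_U=Q_{1,L}$.
   Context: Under $Q^N$, $S_N=S_0\prod_{i=1}^NZ_i$ with $Z_i$ i.i.d. with law $Q=(q_1,\ldots,q_L)$ on $\{a_1,\ldots,a_L\}$. $\mathcal{D}(\mathcal{A},m)$ is the set of probability mass functions on the finite set $\mathcal{A}$ with mean $m$. For $l_1<l_2$ with $a_{l_2}<1+R<a_{l_1}$, $Q_{l_1,l_2}$ is the probability vector with $q_{l_1}=\frac{(1+R)-a_{l_2}}{a_{l_1}-a_{l_2}}$, $q_{l_2}=1-q_{l_1}$, $q_l=0$ otherwise. *)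

theory Defs
  imports Complex_Main "HOL-Library.FuncSet"
begin

definition lat_a :: "real \<Rightarrow> real \<Rightarrow> nat \<Rightarrow> nat \<Rightarrow> real" where
  "lat_a u d L l = u ^ (L - l) * d ^ (l - 1)"

definition mean_D :: "(nat \<Rightarrow> real) \<Rightarrow> nat \<Rightarrow> real \<Rightarrow> (nat \<Rightarrow> real) set" where
  "mean_D a L m = {q. (\<forall>l\<in>{1..L}. 0 \<le> q l) \<and> (\<Sum>l=1..L. q l) = 1
                      \<and> (\<Sum>l=1..L. q l * a l) = m}"

text \<open>Expectation under Q^N of f(S_N), S_N = S_0 * prod Z_i, Z_i i.i.d. with law q on a_1..a_L.\<close>
definition exp_QN :: "(nat \<Rightarrow> real) \<Rightarrow> nat \<Rightarrow> (nat \<Rightarrow> real) \<Rightarrow> real \<Rightarrow> nat \<Rightarrow> (real \<Rightarrow> real) \<Rightarrow> real" where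
  "exp_QN a L q S0 N f =
     (\<Sum>p\<in>PiE {..<N} (\<lambda>_. {1..L}). (\<Prod>i<N. q (p i)) * f (S0 * (\<Prod>i<N. a (p i))))"

definition price0 :: "real \<Rightarrow> (nat \<Rightarrow> real) \<Rightarrow> nat \<Rightarrow> (nat \<Rightarrow> real) \<Rightarrow> real \<Rightarrow> nat \<Rightarrow> (real \<Rightarrow> real) \<Rightarrow> real" where
  "price0 R a L q S0 N f = exp_QN a L q S0 N f / (1 + R) ^ N"

text \<open>Q_{l1,l2}: two-point risk-neutral measure on a_{l1}, a_{l2}.\<close>
definition Q2 :: "real \<Rightarrow> (nat \<Rightarrow> real) \<Rightarrow> nat \<Rightarrow> nat \<Rightarrow> nat \<Rightarrow> real" where
  "Q2 R a l1 l2 l =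
     (if l = l1 then ((1 + R) - a l2) / (a l1 - a l2)
      else if l = l2 then 1 - ((1 + R) - a l2) / (a l1 - a l2)
      else 0)"

end

theory Submission imports Defs begin

definition cvx :: "(real \<Rightarrow> real) \<Rightarrow> bool" where
  "cvx g \<longleftrightarrow> (\<forall>x y t. 0 \<le> t \<and> t \<le> 1 \<longrightarrow> g ((1-t)*x + t*y) \<le> (1-t)*g x + t*g y)"

lemma cvx_comp: assumes "cvx g" shows "cvx (\<lambda>z. g (z*c))"
  unfolding cvx_def
proof (intro allI impI)
  fix x y t :: real assume t: "0 \<le> t \<and> t \<le> 1"
  have "((1-t)*x + t*y)*c = (1-t)*(x*c) + t*(y*c)" by (simp add: algebra_simps)
  then show "g (((1-t)*x + t*y)*c) \<le> (1-t)*g (x*c) + t*g (y*c)"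
    using assms t unfolding cvx_def by metis
qed

lemma cvx_sum:
  assumes "finite A" "\<And>l. l \<in> A \<Longrightarrow> 0 \<le> w l" "\<And>l. l \<in> A \<Longrightarrow> cvx (h l)"
  shows "cvx (\<lambda>z. \<Sum>l\<in>A. w l * h l z)"
  unfolding cvx_def
proof (intro allI impI)
  fix x y t :: real assume t: "0 \<le> t \<and> t \<le> 1"
  have "(\<Sum>l\<in>A. w l * h l ((1-t)*x + t*y)) \<le> (\<Sum>l\<in>A. w l * ((1-t)*h l x + t*h l y))"
    apply (intro sum_mono mult_left_mono)
    using assms t unfolding cvx_def by auto
  also have "\<dots> = (\<Sum>l\<in>A. (1-t)*(w l * h l x) + t*(w l * h l y))"
    by (intro sum.cong) (simp_all add: algebra_simps)
  also have "\<dots> = (1-t)*(\<Sum>l\<in>A. w l * h l x) + t*(\<Sum>l\<in>A. w l * h l y)"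
    by (simp add: sum_distrib_left sum.distrib)
  finally show "(\<Sum>l\<in>A. w l * h l ((1-t)*x + t*y)) \<le> (1-t)*(\<Sum>l\<in>A. w l * h l x) + t*(\<Sum>l\<in>A. w l * h l y)" .
qed

lemma cvx_interp:
  assumes "cvx g" "x < y" "x \<le> z" "z \<le> y"
  shows "(y-x)*g z \<le> (y-z)*g x + (z-x)*g y"
proof -
  define t where "t = (z-x)/(y-x)"
  have t: "0 \<le> t" "t \<le> 1" using assms by (auto simp: t_def field_simps)
  have tt: "t*(y-x) = z-x" using assms by (simp add: t_def)
  have "(1-t)*x + t*y = x + t*(y-x)" by (simp add: algebra_simps)
  then have z: "z = (1-t)*x + t*y" using tt by simp
  have "g z \<le> (1-t)*g x + t*g y" using assms(1) t z unfolding cvx_def by metis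
  then have "(y-x)*g z \<le> (y-x)*((1-t)*g x + t*g y)" using assms by (intro mult_left_mono) auto
  also have "\<dots> = (y-x)*g x - t*(y-x)*g x + t*(y-x)*g y" by (simp add: algebra_simps)
  also have "\<dots> = (y-x)*g x - (z-x)*g x + (z-x)*g y" by (simp only: tt)
  also have "\<dots> = (y-z)*g x + (z-x)*g y" by (simp add: algebra_simps)
  finally show ?thesis .
qed

lemma cvx_extrap:
  assumes "cvx g" "x < y" "z \<le> x \<or> y \<le> z"
  shows "(y-z)*g x + (z-x)*g y \<le> (y-x)*g z"
  using assms(3)
proof
  assume "z \<le> x"
  show ?thesis
  proof (cases "z = x")
    case False
    then have "(y-z)*g x \<le> (y-x)*g z + (x-z)*g y" using cvx_interp[OF assms(1), of z y x] \<open>z \<le> x\<close> assms(2) by auto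
    then show ?thesis by (simp add: algebra_simps)
  qed auto
next
  assume "y \<le> z"
  show ?thesis
  proof (cases "z = y")
    case False
    then have "(z-x)*g y \<le> (z-y)*g x + (y-x)*g z" using cvx_interp[OF assms(1), of x z y] \<open>y \<le> z\<close> assms(2) by auto
    then show ?thesis by (simp add: algebra_simps)
  qed auto
qed

lemma cvx_put: "cvx (\<lambda>s. max (K - s) 0)"
  unfolding cvx_def
proof (intro allI impI)
  fix x y t :: real assume t: "0 \<le> t \<and> t \<le> 1"
  have a: "(1-t)*(K-x) \<le> (1-t)*max (K-x) 0" "t*(K-y) \<le> t*max (K-y) 0" using t by (auto intro: mult_left_mono)
  have b: "0 \<le> (1-t)*max (K-x) 0" "0 \<le> t*max (K-y) 0" using t by auto
  have "K - ((1-t)*x + t*y) = (1-t)*(K-x) + t*(K-y)" by (simp add: algebra_simps)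
  then show "max (K - ((1-t)*x + t*y)) 0 \<le> (1-t)*max (K-x) 0 + t*max (K-y) 0" using a b by linarith
qed

lemma cvx_call: "cvx (\<lambda>s. max (s - K) 0)"
  unfolding cvx_def
proof (intro allI impI)
  fix x y t :: real assume t: "0 \<le> t \<and> t \<le> 1"
  have a: "(1-t)*(x-K) \<le> (1-t)*max (x-K) 0" "t*(y-K) \<le> t*max (y-K) 0" using t by (auto intro: mult_left_mono)
  have b: "0 \<le> (1-t)*max (x-K) 0" "0 \<le> t*max (y-K) 0" using t by auto
  have "((1-t)*x + t*y) - K = (1-t)*(x-K) + t*(y-K)" by (simp add: algebra_simps)
  then show "max (((1-t)*x + t*y) - K) 0 \<le> (1-t)*max (x-K) 0 + t*max (y-K) 0" using a b by linarith
qed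

definition TT :: "(nat \<Rightarrow> real) \<Rightarrow> nat \<Rightarrow> (nat \<Rightarrow> real) \<Rightarrow> (real \<Rightarrow> real) \<Rightarrow> real \<Rightarrow> real" where
  "TT a L q k = (\<lambda>x. \<Sum>l\<in>{1..L}. q l * k (x * a l))"

lemma sum_PiE_Suc:
  "(\<Sum>p\<in>PiE {..<Suc N} (\<lambda>_. A). F p) = (\<Sum>(y,g)\<in>A \<times> PiE {..<N} (\<lambda>_. A). F (g(N:=y)))"
  by (intro sum.reindex_bij_witness[of _ "\<lambda>(y,g). g(N := y)" "\<lambda>g. (g N, g(N := undefined))"])
     (auto simp: PiE_def extensional_def Pi_def)

lemma exp_TT:
  "(\<Sum>p\<in>PiE {..<N} (\<lambda>_. {1..L}). (\<Prod>i<N. q (p i)) * h (x * (\<Prod>i<N. a (p i))))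
    = ((TT a L q) ^^ N) h x"
proof (induction N arbitrary: x)
  case 0
  then show ?case by simp
next
  case (Suc N)
  have pr: "\<And>F g y. (\<Prod>i<N. F ((g(N:=y)) i)) = (\<Prod>i<N. F (g i))"
    by (intro prod.cong) auto
  have "(\<Sum>p\<in>PiE {..<Suc N} (\<lambda>_. {1..L}). (\<Prod>i<Suc N. q (p i)) * h (x * (\<Prod>i<Suc N. a (p i))))
     = (\<Sum>(y,g)\<in>{1..L} \<times> PiE {..<N} (\<lambda>_. {1..L}). (\<Prod>i<N. q (g i)) * q y * h (x * ((\<Prod>i<N. a (g i)) * a y)))"
    by (simp add: sum_PiE_Suc pr)
  also have "\<dots> = (\<Sum>y\<in>{1..L}. \<Sum>g\<in>PiE {..<N} (\<lambda>_. {1..L}). q y * ((\<Prod>i<N. q (g i)) * h ((x * a y) * (\<Prod>i<N. a (g i)))))"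
    by (subst sum.cartesian_product[symmetric]) (simp add: algebra_simps)
  also have "\<dots> = (\<Sum>y\<in>{1..L}. q y * ((TT a L q) ^^ N) h (x * a y))"
    by (intro sum.cong refl) (simp add: sum_distrib_left[symmetric] Suc.IH[symmetric] mult.assoc)
  also have "\<dots> = ((TT a L q) ^^ Suc N) h x" by (simp add: TT_def)
  finally show ?case .
qed

lemma TT_mono:
  assumes "\<And>l. l \<in> {1..L} \<Longrightarrow> 0 \<le> q l"
  shows "(\<And>x. k x \<le> k' x) \<Longrightarrow> ((TT a L q) ^^ N) k x \<le> ((TT a L q) ^^ N) k' x"
proof (induction N arbitrary: k k' x)
  case 0 then show ?case by simp
next
  case (Suc N)
  have pt: "TT a L q k y \<le> TT a L q k' y" for y
    unfolding TT_def by (intro sum_mono mult_left_mono Suc.prems) (use assms in auto)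
  show ?case by (simp only: funpow_Suc_right comp_def) (rule Suc.IH[OF pt])
qed

lemma TT_cvx:
  assumes "\<And>l. l \<in> {1..L} \<Longrightarrow> 0 \<le> q l" "cvx k"
  shows "cvx (TT a L q k)"
  unfolding TT_def using assms by (intro cvx_sum cvx_comp) auto

lemma TT_order:
  assumes "\<And>l. l \<in> {1..L} \<Longrightarrow> 0 \<le> q l" "\<And>l. l \<in> {1..L} \<Longrightarrow> 0 \<le> q' l"
    and one: "\<And>g. cvx g \<Longrightarrow> (\<Sum>l\<in>{1..L}. q l * g (a l)) \<le> (\<Sum>l\<in>{1..L}. q' l * g (a l))"
  shows "cvx k \<Longrightarrow> ((TT a L q) ^^ N) k x \<le> ((TT a L q') ^^ N) k x"
proof (induction N arbitrary: k x)
  case 0 then show ?case by simp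
next
  case (Suc N)
  have pt: "TT a L q k y \<le> TT a L q' k y" for y
    unfolding TT_def using one[OF cvx_comp[OF Suc.prems, of y]] by (simp add: mult.commute)
  have "((TT a L q) ^^ Suc N) k x = ((TT a L q) ^^ N) (TT a L q k) x"
    by (simp only: funpow_Suc_right comp_def)
  also have "\<dots> \<le> ((TT a L q) ^^ N) (TT a L q' k) x"
    by (intro TT_mono assms(1) pt)
  also have "\<dots> \<le> ((TT a L q') ^^ N) (TT a L q' k) x"
    by (intro Suc.IH TT_cvx assms(2) Suc.prems)
  also have "\<dots> = ((TT a L q') ^^ Suc N) k x"
    by (simp only: funpow_Suc_right comp_def)
  finally show ?case .
qed

lemma sum_two:
  fixes c1 c2 :: real and G :: "nat \<Rightarrow> real"
  assumes "l1 \<in> A" "l2 \<in> A" "l1 \<noteq> l2" "finite A"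
  shows "(\<Sum>l\<in>A. (if l = l1 then c1 else if l = l2 then c2 else 0) * G l) = c1 * G l1 + c2 * G l2"
proof -
  have "(\<Sum>l\<in>A. (if l = l1 then c1 else if l = l2 then c2 else 0) * G l)
      = (\<Sum>l\<in>A. (if l = l1 then c1 * G l1 else 0) + (if l = l2 then c2 * G l2 else 0))"
    using assms(3) by (intro sum.cong) auto
  also have "\<dots> = c1 * G l1 + c2 * G l2" using assms by (simp add: sum.distrib)
  finally show ?thesis .
qed

lemma Q2_sum:
  assumes "l1 \<in> {1..L}" "l2 \<in> {1..L}" "l1 \<noteq> l2" "a l1 \<noteq> a l2"
  shows "(\<Sum>l\<in>{1..L}. Q2 R a l1 l2 l * g (a l))
        = (((1+R) - a l2) * g (a l1) + (a l1 - (1+R)) * g (a l2)) / (a l1 - a l2)"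
proof -
  have "(\<Sum>l\<in>{1..L}. Q2 R a l1 l2 l * g (a l))
     = ((1 + R) - a l2) / (a l1 - a l2) * g (a l1) + (1 - ((1 + R) - a l2) / (a l1 - a l2)) * g (a l2)"
    unfolding Q2_def using assms by (intro sum_two) auto
  also have "\<dots> = (((1+R) - a l2) * g (a l1) + (a l1 - (1+R)) * g (a l2)) / (a l1 - a l2)"
  proof -
    have d: "a l1 - a l2 \<noteq> 0" using assms(4) by simp
    have e: "1 - ((1 + R) - a l2) / (a l1 - a l2) = (a l1 - (1+R)) / (a l1 - a l2)"
    proof -
      have gen: "\<And>c D::real. D \<noteq> 0 \<Longrightarrow> 1 - c/D = (D-c)/D" by (simp add: field_simps)
      show ?thesis using gen[OF d, of "(1 + R) - a l2"] by simp
    qed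
    show ?thesis unfolding e by (simp add: add_divide_distrib)
  qed
  finally show ?thesis .
qed

lemma Q2_nonneg:
  assumes "a l2 < 1 + R" "1 + R < a l1"
  shows "0 \<le> Q2 R a l1 l2 l"
  using assms unfolding Q2_def by (auto simp: field_simps)

lemma lin_sum:
  fixes q a :: "nat \<Rightarrow> real"
  shows "(\<Sum>l\<in>A. q l * (\<alpha> * a l + \<beta>)) = \<alpha> * (\<Sum>l\<in>A. q l * a l) + \<beta> * (\<Sum>l\<in>A. q l)"
  by (simp add: algebra_simps sum.distrib sum_distrib_left)

lemma exp_as_TT:
  "exp_QN a L q S0 N f = ((TT a L q) ^^ N) (\<lambda>z. f (S0 * z)) 1"
  unfolding exp_QN_def using exp_TT[where h="\<lambda>z. f (S0 * z)" and x=1 and N=N and L=L and q=q and a=a] by simp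

lemma price_order:
  assumes "\<And>l. l \<in> {1..L} \<Longrightarrow> 0 \<le> q l" "\<And>l. l \<in> {1..L} \<Longrightarrow> 0 \<le> q' l"
    and "\<And>g. cvx g \<Longrightarrow> (\<Sum>l\<in>{1..L}. q l * g (a l)) \<le> (\<Sum>l\<in>{1..L}. q' l * g (a l))"
    and "cvx (\<lambda>z. f (S0 * z))" and "1 + R > 0"
  shows "price0 R a L q S0 N f \<le> price0 R a L q' S0 N f"
  unfolding price0_def exp_as_TT
  by (intro divide_right_mono TT_order[OF assms(1,2,3)] assms(4)) (use assms(5) in auto)

theorem mainTheorem6:
  fixes u d R S0 K :: real and L N :: nat and q f :: "_"
  defines "a \<equiv> lat_a u d L"
  defines "lstar \<equiv> GREATEST l. l \<in> {1..L} \<and> a l > 1 + R"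
  assumes "u > d" and "d > 0"
    and "a L < 1 + R" and "1 + R < a 1"
    and "\<forall>l\<in>{1..L}. a l \<noteq> 1 + R"
    and "S0 > 0" and "K \<ge> 0"
    and "f = (\<lambda>s. max (K - s) 0) \<or> f = (\<lambda>s. max (s - K) 0)"
    and "q \<in> mean_D a L (1 + R)"
  shows "price0 R a L (Q2 R a lstar (lstar + 1)) S0 N f \<le> price0 R a L q S0 N f
         \<and> price0 R a L q S0 N f \<le> price0 R a L (Q2 R a 1 L) S0 N f"
proof -
  define m where "m = 1 + R"
  have aL: "a L < m" and a1: "m < a 1" using assms(5,6) by (auto simp: m_def)
  have apos: "a l > 0" for l unfolding a_def lat_a_def using assms(3,4) by simp
  have m0: "1 + R > 0" using apos[of L] aL by (simp add: m_def)
  have L2: "2 \<le> L"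
  proof (rule ccontr)
    assume "\<not> 2 \<le> L"
    then have "L = 0 \<or> L = 1" by auto
    then have "a L = a 1" unfolding a_def lat_a_def by auto
    then show False using aL a1 by simp
  qed
  have step: "a (Suc j) \<le> a j" if "1 \<le> j" "Suc j \<le> L" for j
  proof -
    have e1: "L - j = Suc (L - Suc j)" using that by simp
    have e2: "Suc j - 1 = Suc (j - 1)" using that by simp
    have "a (Suc j) = u ^ (L - Suc j) * d ^ (j - 1) * d" unfolding a_def lat_a_def e2 by simp
    also have "\<dots> \<le> u ^ (L - Suc j) * d ^ (j - 1) * u"
      using assms(3,4) by (intro mult_left_mono) auto
    also have "\<dots> = a j" unfolding a_def lat_a_def e1 by simp
    finally show ?thesis .
  qed
  have mono: "a j \<le> a i" if "1 \<le> i" "i \<le> j" "j \<le> L" for i j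
    using that
  proof (induction j)
    case 0 then show ?case by simp
  next
    case (Suc j)
    show ?case
    proof (cases "i = Suc j")
      case False
      then have "a j \<le> a i" using Suc by simp
      moreover have "a (Suc j) \<le> a j" using Suc False by (intro step) auto
      ultimately show ?thesis by simp
    qed simp
  qed
  have qD: "\<And>l. l \<in> {1..L} \<Longrightarrow> 0 \<le> q l" "(\<Sum>l=1..L. q l) = 1" "(\<Sum>l=1..L. q l * a l) = m"
    using assms(11) by (auto simp: mean_D_def m_def)
  have cf: "cvx (\<lambda>z. f (S0 * z))"
  proof -
    have "cvx f" using assms(10) cvx_put cvx_call by metis
    then show ?thesis using cvx_comp[of f S0] by (simp add: mult.commute)
  qed
  define P where "P = (\<lambda>l. l \<in> {1..L} \<and> a l > 1 + R)"
  have P1: "P 1" using a1 L2 by (simp add: P_def m_def)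
  have Pb: "\<And>y. P y \<Longrightarrow> y \<le> L" by (simp add: P_def)
  have ls: "P lstar" unfolding lstar_def P_def[symmetric] by (rule GreatestI_nat[where P=P, OF P1 Pb])
  have lsg: "y \<le> lstar" if "P y" for y
    unfolding lstar_def P_def[symmetric] by (rule Greatest_le_nat[where P=P, OF that Pb])
  have s1: "1 \<le> lstar" "lstar \<le> L" "a lstar > m" using ls by (auto simp: P_def m_def)
  have sL: "lstar < L" using s1 aL by (cases "lstar = L") auto
  have s2: "a (lstar + 1) < m"
  proof -
    have "\<not> P (lstar + 1)" using lsg by fastforce
    then have "a (lstar + 1) \<le> m" using sL by (auto simp: P_def m_def)
    moreover have "a (lstar + 1) \<noteq> m" using assms(7) sL by (auto simp: m_def)
    ultimately show ?thesis by simp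
  qed
  have up: "(\<Sum>l\<in>{1..L}. q l * g (a l)) \<le> (\<Sum>l\<in>{1..L}. Q2 R a 1 L l * g (a l))" if g: "cvx g" for g
  proof -
    have pos: "a 1 - a L > 0" using aL a1 by simp
    have "(a 1 - a L) * (\<Sum>l\<in>{1..L}. q l * g (a l)) = (\<Sum>l\<in>{1..L}. q l * ((a 1 - a L) * g (a l)))"
      by (simp add: sum_distrib_left algebra_simps)
    also have "\<dots> \<le> (\<Sum>l\<in>{1..L}. q l * ((g (a 1) - g (a L)) * a l + (a 1 * g (a L) - a L * g (a 1))))"
    proof (intro sum_mono mult_left_mono)
      fix l assume l: "l \<in> {1..L}"
      have "a L \<le> a l" "a l \<le> a 1" using l mono by auto
      then have "(a 1 - a L) * g (a l) \<le> (a 1 - a l) * g (a L) + (a l - a L) * g (a 1)"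
        using cvx_interp[OF g, of "a L" "a 1" "a l"] pos by simp
      then show "(a 1 - a L) * g (a l) \<le> (g (a 1) - g (a L)) * a l + (a 1 * g (a L) - a L * g (a 1))"
        by (simp add: algebra_simps)
      show "0 \<le> q l" using qD l by auto
    qed
    also have "\<dots> = (m - a L) * g (a 1) + (a 1 - m) * g (a L)"
      unfolding lin_sum using qD by (simp add: algebra_simps)
    finally have "(\<Sum>l\<in>{1..L}. q l * g (a l)) \<le> ((m - a L) * g (a 1) + (a 1 - m) * g (a L)) / (a 1 - a L)"
      using pos by (simp add: pos_le_divide_eq mult.commute)
    also have "\<dots> = (\<Sum>l\<in>{1..L}. Q2 R a 1 L l * g (a l))"
      using L2 aL a1 by (subst Q2_sum) (auto simp: m_def)
    finally show ?thesis .
  qed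
  have lo: "(\<Sum>l\<in>{1..L}. Q2 R a lstar (lstar+1) l * g (a l)) \<le> (\<Sum>l\<in>{1..L}. q l * g (a l))" if g: "cvx g" for g
  proof -
    define x where "x = a (lstar + 1)"
    define y where "y = a lstar"
    have xy: "x < m" "m < y" using s1 s2 by (auto simp: x_def y_def)
    have pos: "y - x > 0" using xy by simp
    have "(\<Sum>l\<in>{1..L}. Q2 R a lstar (lstar+1) l * g (a l)) = ((m - x) * g y + (y - m) * g x) / (y - x)"
      using s1 sL xy by (subst Q2_sum) (auto simp: m_def x_def y_def)
    also have "\<dots> \<le> (\<Sum>l\<in>{1..L}. q l * g (a l))"
    proof -
      have "(m - x) * g y + (y - m) * g x = (\<Sum>l\<in>{1..L}. q l * ((g y - g x) * a l + (y * g x - x * g y)))"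
        unfolding lin_sum using qD by (simp add: algebra_simps)
      also have "\<dots> \<le> (\<Sum>l\<in>{1..L}. q l * ((y - x) * g (a l)))"
      proof (intro sum_mono mult_left_mono)
        fix l assume l: "l \<in> {1..L}"
        have "a l \<le> x \<or> y \<le> a l"
        proof (cases "l \<le> lstar")
          case True then show ?thesis using mono[of l lstar] l s1 by (auto simp: y_def)
        next
          case False then show ?thesis using mono[of "lstar+1" l] l s1 by (auto simp: x_def)
        qed
        then have "(y - a l) * g x + (a l - x) * g y \<le> (y - x) * g (a l)"
          using cvx_extrap[OF g, of x y "a l"] pos by auto
        then show "(g y - g x) * a l + (y * g x - x * g y) \<le> (y - x) * g (a l)"
          by (simp add: algebra_simps)
        show "0 \<le> q l" using qD l by auto
      qed
      also have "\<dots> = (y - x) * (\<Sum>l\<in>{1..L}. q l * g (a l))"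
        by (simp add: sum_distrib_left algebra_simps)
      finally show ?thesis using pos by (simp add: pos_divide_le_eq mult.commute)
    qed
    finally show ?thesis .
  qed
  have nL: "\<And>l. 0 \<le> Q2 R a lstar (lstar+1) l" using s1 s2 by (intro Q2_nonneg) (auto simp: m_def)
  have nU: "\<And>l. 0 \<le> Q2 R a 1 L l" using aL a1 by (intro Q2_nonneg) (auto simp: m_def)
  show ?thesis
  proof
    show "price0 R a L (Q2 R a lstar (lstar + 1)) S0 N f \<le> price0 R a L q S0 N f"
      by (rule price_order[OF nL qD(1) lo cf m0])
    show "price0 R a L q S0 N f \<le> price0 R a L (Q2 R a 1 L) S0 N f"
      by (rule price_order[OF qD(1) nU up cf m0])
  qed
qed

end
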